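(* Let \((X,d)\) be a metric space. The following statements are equivalent: (i) \(d\) is an ultrametric, i.e. \(d(x,y)\le\max\{d(x,z),d(z,y)\}\) for all \(x,y,z\in X\); (ii) \(f\circ d\) is a metric on \(X\) for every amenable and increasing function \(f\colon[0,\infty)\to[0,\infty)\); (iii) \(f\circ d\) is a metric on \(X\) for every amenable function \(f\colon[0,\infty)\to[0,\infty)\) which satisfies \(f(a)\le 2f(b)\) whenever \(0\le a\le b\).
   Context: A function \(f\colon[0,\infty)\to[0,\infty)\) is amenable if \(f^{-1}(\{0\})=\{0\}\), and increasing if \(a\ge b\) implies \(f(a)\ge f(b)\). *)

theory Defs
  imports "HOL-Analysis.Analysis"
begin

definition is_metric_on :: "'a set \<Rightarrow> ('a \<Rightarrow> 'a \<Rightarrow> real) \<Rightarrow> bool" where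
  "is_metric_on X d \<longleftrightarrow>
     (\<forall>x\<in>X. \<forall>y\<in>X. d x y \<ge> 0) \<and>
     (\<forall>x\<in>X. \<forall>y\<in>X. d x y = 0 \<longleftrightarrow> x = y) \<and>
     (\<forall>x\<in>X. \<forall>y\<in>X. d x y = d y x) \<and>
     (\<forall>x\<in>X. \<forall>y\<in>X. \<forall>z\<in>X. d x y \<le> d x z + d z y)"

definition is_ultrametric_on :: "'a set \<Rightarrow> ('a \<Rightarrow> 'a \<Rightarrow> real) \<Rightarrow> bool" where
  "is_ultrametric_on X d \<longleftrightarrow>
     (\<forall>x\<in>X. \<forall>y\<in>X. \<forall>z\<in>X. d x y \<le> max (d x z) (d z y))"

text \<open>A function f : [0,\<infinity>) \<rightarrow> [0,\<infinity>), represented as a real function whose behaviour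
  on [0,\<infinity>) is all that matters.\<close>
definition nonneg_fun :: "(real \<Rightarrow> real) \<Rightarrow> bool" where
  "nonneg_fun f \<longleftrightarrow> (\<forall>t\<ge>0. f t \<ge> 0)"

definition amenable :: "(real \<Rightarrow> real) \<Rightarrow> bool" where
  "amenable f \<longleftrightarrow> (\<forall>t\<ge>0. f t = 0 \<longleftrightarrow> t = 0)"

definition increasing_on_nonneg :: "(real \<Rightarrow> real) \<Rightarrow> bool" where
  "increasing_on_nonneg f \<longleftrightarrow> (\<forall>a\<ge>0. \<forall>b\<ge>0. a \<ge> b \<longrightarrow> f a \<ge> f b)"

end

theory Submission
  imports Defs
begin

lemma met_nn: "is_metric_on X d \<Longrightarrow> x \<in> X \<Longrightarrow> y \<in> X \<Longrightarrow> d x y \<ge> 0"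
  unfolding is_metric_on_def by (elim conjE) (drule bspec, assumption, drule bspec, assumption, assumption)
lemma met_tri: "is_metric_on X d \<Longrightarrow> x \<in> X \<Longrightarrow> y \<in> X \<Longrightarrow> z \<in> X \<Longrightarrow> d x y \<le> d x z + d z y"
  unfolding is_metric_on_def by (elim conjE) (drule bspec, assumption, drule bspec, assumption, drule bspec, assumption, assumption)
lemma met_sym: "is_metric_on X d \<Longrightarrow> x \<in> X \<Longrightarrow> y \<in> X \<Longrightarrow> d x y = d y x"
  unfolding is_metric_on_def by (elim conjE) (drule bspec, assumption, drule bspec, assumption, assumption)
lemma met_eq: "is_metric_on X d \<Longrightarrow> x \<in> X \<Longrightarrow> y \<in> X \<Longrightarrow> d x y = 0 \<longleftrightarrow> x = y"
  unfolding is_metric_on_def by (elim conjE) (drule bspec, assumption, drule bspec, assumption, assumption)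
lemma met_intro: "(\<And>x y. x\<in>X \<Longrightarrow> y\<in>X \<Longrightarrow> d x y \<ge> 0) \<Longrightarrow> (\<And>x y. x\<in>X \<Longrightarrow> y\<in>X \<Longrightarrow> d x y = 0 \<longleftrightarrow> x = y)
  \<Longrightarrow> (\<And>x y. x\<in>X \<Longrightarrow> y\<in>X \<Longrightarrow> d x y = d y x)
  \<Longrightarrow> (\<And>x y z. x\<in>X \<Longrightarrow> y\<in>X \<Longrightarrow> z\<in>X \<Longrightarrow> d x y \<le> d x z + d z y) \<Longrightarrow> is_metric_on X d"
  unfolding is_metric_on_def by (intro conjI ballI)

lemma ultra_to_metric:
  assumes m: "is_metric_on X d" and u: "is_ultrametric_on X d"
    and nn: "nonneg_fun f" and am: "amenable f"
    and h: "\<forall>a b. 0 \<le> a \<and> a \<le> b \<longrightarrow> f a \<le> 2 * f b"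
  shows "is_metric_on X (\<lambda>x y. f (d x y))"
proof -
  have tri: "f (d x y) \<le> f (d x z) + f (d z y)" if xyz: "x\<in>X" "y\<in>X" "z\<in>X" for x y z
  proof -
    have s: "d x y = d y x" "d x z = d z x" "d z y = d y z" using met_sym[OF m xyz(1,2)] met_sym[OF m xyz(1,3)] met_sym[OF m xyz(3,2)] by simp_all
    have p: "d x y \<ge> 0" "d x z \<ge> 0" "d z y \<ge> 0" using met_nn[OF m xyz(1,2)] met_nn[OF m xyz(1,3)] met_nn[OF m xyz(3,2)] by simp_all
    have u1: "d x y \<le> max (d x z) (d z y)" using u xyz unfolding is_ultrametric_on_def by blast
    have u2: "d x z \<le> max (d x y) (d y z)" using u xyz unfolding is_ultrametric_on_def by blast
    have u3: "d z y \<le> max (d z x) (d x y)" using u xyz unfolding is_ultrametric_on_def by blast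
    have f0: "f (d x z) \<ge> 0" "f (d z y) \<ge> 0" using nn p unfolding nonneg_fun_def by auto
    consider "d x z = d z y" "d x y \<le> d x z" | "d x y = d x z" | "d x y = d z y"
      using u1 u2 u3 s by linarith
    then show ?thesis
    proof cases
      case 1
      have "f (d x y) \<le> 2 * f (d x z)" using h p(1) 1(2) by blast
      then show ?thesis using 1(1) by simp
    next
      case 2 then show ?thesis using f0 by simp
    next
      case 3 then show ?thesis using f0 by simp
    qed
  qed
  show ?thesis
  proof (rule met_intro)
    fix x y assume xy: "x \<in> X" "y \<in> X"
    have p: "d x y \<ge> 0" by (rule met_nn[OF m xy])
    then show "f (d x y) \<ge> 0" using nn unfolding nonneg_fun_def by blast
    have "f (d x y) = 0 \<longleftrightarrow> d x y = 0" using am p unfolding amenable_def by blast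
    then show "f (d x y) = 0 \<longleftrightarrow> x = y" using met_eq[OF m xy] by simp
    show "f (d x y) = f (d y x)" using met_sym[OF m xy] by simp
  next
    fix x y z assume "x \<in> X" "y \<in> X" "z \<in> X"
    then show "f (d x y) \<le> f (d x z) + f (d z y)" by (rule tri)
  qed
qed

theorem theorem2p12:
  fixes X :: "'a set" and d :: "'a \<Rightarrow> 'a \<Rightarrow> real"
  assumes "is_metric_on X d"
  shows "(is_ultrametric_on X d
           \<longleftrightarrow> (\<forall>f. nonneg_fun f \<and> amenable f \<and> increasing_on_nonneg f
                   \<longrightarrow> is_metric_on X (\<lambda>x y. f (d x y))))
       \<and> (is_ultrametric_on X d
           \<longleftrightarrow> (\<forall>f. nonneg_fun f \<and> amenable f
                     \<and> (\<forall>a b. 0 \<le> a \<and> a \<le> b \<longrightarrow> f a \<le> 2 * f b)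
                   \<longrightarrow> is_metric_on X (\<lambda>x y. f (d x y))))"
proof -
  have inc2: "\<forall>a b. 0 \<le> a \<and> a \<le> b \<longrightarrow> f a \<le> 2 * f b"
    if "nonneg_fun f" "increasing_on_nonneg f" for f
  proof (intro allI impI)
    fix a b :: real assume ab: "0 \<le> a \<and> a \<le> b"
    have "f a \<le> f b" using that(2) ab unfolding increasing_on_nonneg_def by auto
    moreover have "f b \<ge> 0" using that(1) ab unfolding nonneg_fun_def by auto
    ultimately show "f a \<le> 2 * f b" by linarith
  qed
  have conv: "is_ultrametric_on X d"
    if H: "\<And>f. nonneg_fun f \<Longrightarrow> amenable f \<Longrightarrow> increasing_on_nonneg f
              \<Longrightarrow> (\<forall>a b. 0 \<le> a \<and> a \<le> b \<longrightarrow> f a \<le> 2 * f b)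
              \<Longrightarrow> is_metric_on X (\<lambda>x y. f (d x y))"
  proof (rule ccontr)
    assume "\<not> is_ultrametric_on X d"
    then obtain x y z where xyz: "x\<in>X" "y\<in>X" "z\<in>X" and lt: "\<not> d x y \<le> max (d x z) (d z y)"
      unfolding is_ultrametric_on_def by blast
    define m where "m = max (d x z) (d z y)"
    have "d x z \<ge> 0" using met_nn[OF assms xyz(1,3)] .
    then have m0: "m \<ge> 0" unfolding m_def by linarith
    define f :: "real \<Rightarrow> real" where "f t = (if t \<le> 0 then 0 else if t \<le> m then 1 else 3)" for t
    have "nonneg_fun f" unfolding nonneg_fun_def f_def by auto
    moreover have "amenable f" unfolding amenable_def f_def using m0 by auto
    moreover have "increasing_on_nonneg f" unfolding increasing_on_nonneg_def f_def by auto
    moreover have "\<forall>a b. 0 \<le> a \<and> a \<le> b \<longrightarrow> f a \<le> 2 * f b" unfolding f_def by auto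
    ultimately have "is_metric_on X (\<lambda>x y. f (d x y))" using H by blast
    then have "f (d x y) \<le> f (d x z) + f (d z y)" by (rule met_tri[OF _ xyz])
    moreover have "f (d x y) = 3" using lt m0 unfolding f_def m_def by auto
    moreover have "f (d x z) \<le> 1" "f (d z y) \<le> 1" unfolding f_def m_def by auto
    ultimately show False by linarith
  qed
  show ?thesis
  proof (intro conjI iffI allI impI)
    fix f assume "is_ultrametric_on X d" "nonneg_fun f \<and> amenable f \<and> increasing_on_nonneg f"
    then show "is_metric_on X (\<lambda>x y. f (d x y))" using ultra_to_metric[OF assms, of f] inc2[of f] by simp
  next
    assume "\<forall>f. nonneg_fun f \<and> amenable f \<and> increasing_on_nonneg f \<longrightarrow> is_metric_on X (\<lambda>x y. f (d x y))"
    then show "is_ultrametric_on X d" by (intro conv) simp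
  next
    fix f assume "is_ultrametric_on X d" "nonneg_fun f \<and> amenable f
                     \<and> (\<forall>a b. 0 \<le> a \<and> a \<le> b \<longrightarrow> f a \<le> 2 * f b)"
    then show "is_metric_on X (\<lambda>x y. f (d x y))" using ultra_to_metric[OF assms, of f] by simp
  next
    assume "\<forall>f. nonneg_fun f \<and> amenable f \<and> (\<forall>a b. 0 \<le> a \<and> a \<le> b \<longrightarrow> f a \<le> 2 * f b) \<longrightarrow> is_metric_on X (\<lambda>x y. f (d x y))"
    then show "is_ultrametric_on X d" by (intro conv) simp
  qed
qed

end
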